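(* Let $X$ be a homogeneous chain and $J$ a proper regular interval of $X$; put $J^-=\{t\in X\mid t<x\ \forall x\in J\}$, $J^+=\{t\in X\mid t>x\ \forall x\in J\}$ and $H=\{g\in\mathrm{Aut}(X)\mid g(x)\in J\ \forall x\in J\}$. Then: (1) $H$ is an open subgroup of $(\mathrm{Aut}(X),\tau_p)$, and hence of $(\mathrm{Aut}(X),\tau_\partial)$; (2) $(H,\tau_p)\cong(\mathrm{Aut}(J^-),\tau_p)\times(\mathrm{Aut}(J),\tau_p)\times(\mathrm{Aut}(J^+),\tau_p)$ and $(H,\tau_\partial)\cong(\mathrm{Aut}(J^-),\tau_\partial)\times(\mathrm{Aut}(J),\tau_\partial)\times(\mathrm{Aut}(J^+),\tau_\partial)$ as topological groups; (3) for every $x\in J$, the stabilizer of $x$ for the action $\mathrm{Aut}(X)\curvearrowright X$ equals $\mathrm{Aut}(J^-)\times \mathrm{St}^J_x\times\mathrm{Aut}(J^+)$, where $\mathrm{St}^J_x$ is the stabilizer of $x$ for the action $\mathrm{Aut}(J)\curvearrowright J$.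
   Context: Chain: linearly ordered set; $\mathrm{Aut}(Y)$: group of order-preserving bijections of a chain $Y$; $X$ homogeneous: $\mathrm{Aut}(X)$ transitive. An interval is a convex subset; an interval $J$ is regular if for all $x,y\in J$ and $g\in\mathrm{Aut}(X)$, $g(x)\in J$ implies $g(y)\in J$; it is proper if it is neither a singleton nor $X$. Automorphisms of $J^-$, $J$, $J^+$ are identified with automorphisms of $X=J^-\cup J\cup J^+$ that are the identity on the other two parts. For a chain $Y$, $\tau_p$ on $\mathrm{Aut}(Y)$ is the topology of pointwise convergence w.r.t. the order topology on $Y$, and $\tau_\partial$ is the permutation topology (identity neighbourhood base: pointwise stabilizers of finite subsets of $Y$). *)

theory Defs
  imports "HOL-Analysis.Analysis"
begin

text \<open>Chains are modelled as subsets of a linearly ordered type. Automorphisms of a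
sub-chain S are order-preserving bijections of S, identified with maps of the whole
type that are the identity outside S.\<close>

definition Aut_on :: "'a::linorder set \<Rightarrow> ('a \<Rightarrow> 'a) set" where
  "Aut_on S = {g. bij_betw g S S \<and> mono_on S g \<and> (\<forall>x. x \<notin> S \<longrightarrow> g x = x)}"

definition homogeneous_chain :: "'a::linorder itself \<Rightarrow> bool" where
  "homogeneous_chain TYPE('a) \<longleftrightarrow> (\<forall>x y::'a. \<exists>g\<in>Aut_on UNIV. g x = y)"

definition is_interval :: "'a::linorder set \<Rightarrow> bool" where
  "is_interval J \<longleftrightarrow> (\<forall>x y z. x \<in> J \<longrightarrow> z \<in> J \<longrightarrow> x \<le> y \<longrightarrow> y \<le> z \<longrightarrow> y \<in> J)"

definition regular_interval :: "'a::linorder set \<Rightarrow> bool" where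
  "regular_interval J \<longleftrightarrow> is_interval J \<and>
     (\<forall>x\<in>J. \<forall>y\<in>J. \<forall>g\<in>Aut_on (UNIV::'a set). g x \<in> J \<longrightarrow> g y \<in> J)"

definition proper_interval :: "'a::linorder set \<Rightarrow> bool" where
  "proper_interval J \<longleftrightarrow> (\<nexists>x. J = {x}) \<and> J \<noteq> UNIV"

definition lower_part :: "'a::linorder set \<Rightarrow> 'a set" where
  "lower_part J = {t. \<forall>x\<in>J. t < x}"

definition upper_part :: "'a::linorder set \<Rightarrow> 'a set" where
  "upper_part J = {t. \<forall>x\<in>J. x < t}"

definition order_top_on :: "'a::linorder set \<Rightarrow> 'a topology" where
  "order_top_on S = topology_generated_by
     ({S} \<union> {{y\<in>S. y < a} | a. a \<in> S} \<union> {{y\<in>S. a < y} | a. a \<in> S})"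

definition pointwise_top :: "('a \<Rightarrow> 'a) set \<Rightarrow> 'a set \<Rightarrow> 'a topology \<Rightarrow> ('a \<Rightarrow> 'a) topology" where
  "pointwise_top G S T = topology_generated_by
     ({G} \<union> {{g\<in>G. g x \<in> U} | x U. x \<in> S \<and> openin T U})"

definition tau_p :: "'a::linorder set \<Rightarrow> ('a \<Rightarrow> 'a) topology" where
  "tau_p S = pointwise_top (Aut_on S) S (order_top_on S)"

definition perm_open :: "('a \<Rightarrow> 'a) set \<Rightarrow> 'a set \<Rightarrow> ('a \<Rightarrow> 'a) set \<Rightarrow> bool" where
  "perm_open G S U \<longleftrightarrow> U \<subseteq> G \<and>
     (\<forall>g\<in>U. \<exists>F. finite F \<and> F \<subseteq> S \<and> (\<lambda>h. g \<circ> h) ` {h\<in>G. \<forall>x\<in>F. h x = x} \<subseteq> U)"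

lemma istopology_perm_open: "istopology (perm_open G S)"
  unfolding istopology_def
proof (intro conjI allI impI)
  fix U V assume U: "perm_open G S U" and V: "perm_open G S V"
  show "perm_open G S (U \<inter> V)"
    unfolding perm_open_def
  proof (intro conjI ballI)
    show "U \<inter> V \<subseteq> G" using U unfolding perm_open_def by blast
  next
    fix g assume g: "g \<in> U \<inter> V"
    obtain F1 where F1: "finite F1" "F1 \<subseteq> S" "(\<lambda>h. g \<circ> h) ` {h\<in>G. \<forall>x\<in>F1. h x = x} \<subseteq> U"
      using U g unfolding perm_open_def by blast
    obtain F2 where F2: "finite F2" "F2 \<subseteq> S" "(\<lambda>h. g \<circ> h) ` {h\<in>G. \<forall>x\<in>F2. h x = x} \<subseteq> V"
      using V g unfolding perm_open_def by blast
    show "\<exists>F. finite F \<and> F \<subseteq> S \<and> (\<lambda>h. g \<circ> h) ` {h\<in>G. \<forall>x\<in>F. h x = x} \<subseteq> U \<inter> V"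
    proof (rule exI[of _ "F1 \<union> F2"], intro conjI)
      show "finite (F1 \<union> F2)" "F1 \<union> F2 \<subseteq> S" using F1 F2 by auto
      have "{h\<in>G. \<forall>x\<in>F1 \<union> F2. h x = x} \<subseteq> {h\<in>G. \<forall>x\<in>F1. h x = x}"
           "{h\<in>G. \<forall>x\<in>F1 \<union> F2. h x = x} \<subseteq> {h\<in>G. \<forall>x\<in>F2. h x = x}" by auto
      then show "(\<lambda>h. g \<circ> h) ` {h\<in>G. \<forall>x\<in>F1 \<union> F2. h x = x} \<subseteq> U \<inter> V"
        using F1(3) F2(3) by (meson image_mono le_inf_iff subset_trans)
    qed
  qed
next
  fix K assume K: "\<forall>U\<in>K. perm_open G S U"
  show "perm_open G S (\<Union>K)"
    unfolding perm_open_def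
  proof (intro conjI ballI)
    show "\<Union>K \<subseteq> G" using K unfolding perm_open_def by blast
  next
    fix g assume "g \<in> \<Union>K"
    then obtain U where "U \<in> K" "g \<in> U" by blast
    then obtain F where "finite F" "F \<subseteq> S" "(\<lambda>h. g \<circ> h) ` {h\<in>G. \<forall>x\<in>F. h x = x} \<subseteq> U"
      using K unfolding perm_open_def by meson
    then show "\<exists>F. finite F \<and> F \<subseteq> S \<and> (\<lambda>h. g \<circ> h) ` {h\<in>G. \<forall>x\<in>F. h x = x} \<subseteq> \<Union>K"
      using \<open>U \<in> K\<close> by blast
  qed
qed

definition tau_d :: "'a::linorder set \<Rightarrow> ('a \<Rightarrow> 'a) topology" where
  "tau_d S = topology (perm_open (Aut_on S) S)"

definition is_subgroup_of :: "('a \<Rightarrow> 'a) set \<Rightarrow> ('a \<Rightarrow> 'a) set \<Rightarrow> bool" where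
  "is_subgroup_of H G \<longleftrightarrow> H \<subseteq> G \<and> id \<in> H \<and> (\<forall>g\<in>H. \<forall>h\<in>H. g \<circ> h \<in> H) \<and> (\<forall>g\<in>H. inv g \<in> H)"

definition top_group_iso3 ::
  "('a \<Rightarrow> 'a) set \<Rightarrow> ('a \<Rightarrow> 'a) topology \<Rightarrow>
   ('a \<Rightarrow> 'a) topology \<Rightarrow> ('a \<Rightarrow> 'a) topology \<Rightarrow> ('a \<Rightarrow> 'a) topology \<Rightarrow>
   (('a \<Rightarrow> 'a) \<Rightarrow> ('a \<Rightarrow> 'a) \<times> ('a \<Rightarrow> 'a) \<times> ('a \<Rightarrow> 'a)) \<Rightarrow> bool" where
  "top_group_iso3 H T TA TB TC \<phi> \<longleftrightarrow>
     homeomorphic_map (subtopology T H) (prod_topology TA (prod_topology TB TC)) \<phi> \<and>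
     (\<forall>g\<in>H. \<forall>h\<in>H. \<phi> (g \<circ> h) =
        (fst (\<phi> g) \<circ> fst (\<phi> h), fst (snd (\<phi> g)) \<circ> fst (snd (\<phi> h)),
         snd (snd (\<phi> g)) \<circ> snd (snd (\<phi> h))))"

end

theory Submission
  imports Defs
begin

lemma aut_out: "g \<in> Aut_on S \<Longrightarrow> x \<notin> S \<Longrightarrow> g x = x"
  by (simp add: Aut_on_def)

lemma aut_in: "g \<in> Aut_on S \<Longrightarrow> x \<in> S \<Longrightarrow> g x \<in> S"
  by (auto simp: Aut_on_def bij_betw_def)

lemma aut_mem_iff: "g \<in> Aut_on S \<Longrightarrow> g x \<in> S \<longleftrightarrow> x \<in> S"
  by (metis aut_in aut_out)

lemma aut_inj: "g \<in> Aut_on S \<Longrightarrow> inj g"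
proof (rule injI)
  fix x y assume g: "g \<in> Aut_on S" and e: "g x = g y"
  show "x = y"
  proof (cases "x \<in> S")
    case True
    then have "y \<in> S" using e aut_mem_iff[OF g] by metis
    then show ?thesis using True e g by (auto simp: Aut_on_def bij_betw_def inj_on_def)
  next
    case False
    then have "y \<notin> S" using e aut_mem_iff[OF g] by metis
    then show ?thesis using False e g by (simp add: aut_out)
  qed
qed

lemma aut_surj: "g \<in> Aut_on S \<Longrightarrow> surj g"
proof -
  assume g: "g \<in> Aut_on S"
  have "y \<in> range g" for y
  proof (cases "y \<in> S")
    case True
    then have "y \<in> g ` S" using g by (auto simp: Aut_on_def bij_betw_def)
    then show ?thesis by blast
  next
    case False then show ?thesis using g by (metis aut_out rangeI)
  qed
  then show ?thesis by blast
qed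

lemma aut_bij: "g \<in> Aut_on S \<Longrightarrow> bij g"
  by (simp add: aut_inj aut_surj bij_def)

lemma aut_le: "g \<in> Aut_on S \<Longrightarrow> x \<in> S \<Longrightarrow> y \<in> S \<Longrightarrow> x \<le> y \<Longrightarrow> g x \<le> g y"
  by (auto simp: Aut_on_def mono_on_def)

lemma aut_less: "g \<in> Aut_on S \<Longrightarrow> x \<in> S \<Longrightarrow> y \<in> S \<Longrightarrow> x < y \<Longrightarrow> g x < g y"
proof -
  assume a: "g \<in> Aut_on S" "x \<in> S" "y \<in> S" "x < y"
  then have "g x \<le> g y" using aut_le[of g S x y] by simp
  moreover have "g x \<noteq> g y" using a aut_inj[OF a(1)] by (metis injD less_irrefl)
  ultimately show ?thesis by simp
qed

lemma aut_less_iff: "g \<in> Aut_on S \<Longrightarrow> x \<in> S \<Longrightarrow> y \<in> S \<Longrightarrow> g x < g y \<longleftrightarrow> x < y"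
  by (metis aut_less not_less_iff_gr_or_eq)

lemma aut_id: "id \<in> Aut_on S"
  by (auto simp: Aut_on_def mono_on_def)

lemma aut_comp: "g \<in> Aut_on S \<Longrightarrow> h \<in> Aut_on S \<Longrightarrow> g \<circ> h \<in> Aut_on S"
proof -
  assume g: "g \<in> Aut_on S" and h: "h \<in> Aut_on S"
  have "bij_betw (g \<circ> h) S S" using g h unfolding Aut_on_def by (auto intro: bij_betw_trans)
  moreover have "mono_on S (g \<circ> h)" unfolding mono_on_def
    using g h aut_le aut_in by (metis comp_apply)
  moreover have "\<forall>x. x \<notin> S \<longrightarrow> (g \<circ> h) x = x" using g h by (simp add: aut_out)
  ultimately show ?thesis by (simp add: Aut_on_def)
qed

lemma aut_inv: assumes g: "g \<in> Aut_on S" shows "inv g \<in> Aut_on S"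
proof -
  have b: "bij g" using aut_bij[OF g] .
  have i: "inv g x \<in> S \<longleftrightarrow> x \<in> S" for x
    by (metis aut_mem_iff b bij_inv_eq_iff g)
  have "bij_betw (inv g) S S"
    unfolding bij_betw_def
  proof
    show "inj_on (inv g) S" using b bij_imp_bij_inv bij_is_inj inj_on_subset by blast
    show "inv g ` S = S"
    proof
      show "inv g ` S \<subseteq> S" using i by auto
      show "S \<subseteq> inv g ` S"
      proof
        fix x assume "x \<in> S"
        then have "g x \<in> S" "x = inv g (g x)" using g aut_in b bij_is_inj[OF b] inv_f_f[of g x] by auto
        then show "x \<in> inv g ` S" by blast
      qed
    qed
  qed
  moreover have "mono_on S (inv g)"
    unfolding mono_on_def
  proof (intro allI impI)
    fix r s assume "r \<in> S \<and> s \<in> S \<and> r \<le> s"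
    then show "inv g r \<le> inv g s"
      using aut_less_iff[OF g, of "inv g s" "inv g r"] i b
      by (metis bij_inv_eq_iff not_le)
  qed
  moreover have "\<forall>x. x \<notin> S \<longrightarrow> inv g x = x"
    using g b by (metis aut_out bij_inv_eq_iff)
  ultimately show ?thesis by (simp add: Aut_on_def)
qed

lemma aut_inv_f: "g \<in> Aut_on S \<Longrightarrow> inv g (g x) = x"
  by (simp add: aut_inj)

lemma aut_f_inv: "g \<in> Aut_on S \<Longrightarrow> g (inv g x) = x"
  by (meson aut_surj surj_f_inv_f)

lemma order_top_basis:
  shows "openin (order_top_on S) S"
    and "a \<in> S \<Longrightarrow> openin (order_top_on S) {y\<in>S. y < a}"
    and "a \<in> S \<Longrightarrow> openin (order_top_on S) {y\<in>S. a < y}"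
  unfolding order_top_on_def by (rule topology_generated_by_Basis, blast)+

lemma order_top_UNIV_basis:
  "openin (order_top_on UNIV) {y. y < a}" "openin (order_top_on UNIV) {y. a < y}"
  using order_top_basis(2,3)[of a UNIV] by simp_all

lemma topspace_order_top [simp]: "topspace (order_top_on S) = S"
  unfolding order_top_on_def topology_generated_by_topspace by auto

lemma order_top_sub:
  assumes conv: "is_interval S"
  shows "order_top_on S = subtopology (order_top_on UNIV) S"
proof (rule topology_eq[THEN iffD2], intro allI iffI)
  fix U assume "openin (order_top_on S) U"
  then have "generate_topology_on
     ({S} \<union> {{y\<in>S. y < a} | a. a \<in> S} \<union> {{y\<in>S. a < y} | a. a \<in> S}) U"
    unfolding order_top_on_def by (rule openin_topology_generated_by)
  then show "openin (subtopology (order_top_on UNIV) S) U"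
  proof (induction rule: generate_topology_on.induct)
    case Empty then show ?case by simp
  next
    case (Int a b) then show ?case by (simp add: openin_Int)
  next
    case (UN K) then show ?case by (simp add: openin_Union)
  next
    case (Basis s)
    then consider "s = S" | a where "s = {y\<in>S. y < a}" | a where "s = {y\<in>S. a < y}" by blast
    then show ?case
    proof cases
      case 1 then show ?thesis by (metis openin_topspace topspace_order_top topspace_subtopology inf_top_left)
    next
      case 2 then show ?thesis unfolding openin_subtopology
        using order_top_UNIV_basis(1)[of a] by blast
    next
      case 3 then show ?thesis unfolding openin_subtopology
        using order_top_UNIV_basis(2)[of a] by blast
    qed
  qed
next
  fix U assume "openin (subtopology (order_top_on UNIV) S) U"
  then obtain T where T: "openin (order_top_on UNIV) T" "U = T \<inter> S"
    unfolding openin_subtopology by blast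
  have "generate_topology_on
     ({UNIV} \<union> {{y\<in>UNIV. y < a} | a. a \<in> UNIV} \<union> {{y\<in>UNIV. a < y} | a. a \<in> UNIV}) T"
    using T(1) unfolding order_top_on_def by (rule openin_topology_generated_by)
  then have "openin (order_top_on S) (T \<inter> S)"
  proof (induction rule: generate_topology_on.induct)
    case Empty then show ?case by simp
  next
    case (Int a b)
    have "a \<inter> b \<inter> S = (a \<inter> S) \<inter> (b \<inter> S)" by blast
    then show ?case using Int by (simp add: openin_Int)
  next
    case (UN K)
    have eq: "\<Union>K \<inter> S = \<Union>((\<lambda>k. k \<inter> S) ` K)" by blast
    have "openin (order_top_on S) (\<Union>((\<lambda>k. k \<inter> S) ` K))" by (rule openin_Union) (use UN.IH in auto)
    then show ?case by (simp only: eq)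
  next
    case (Basis s)
    then consider "s = UNIV" | a where "s = {y. y < a}" | a where "s = {y. a < y}" by auto
    then show ?case
    proof cases
      case 1 then show ?thesis using order_top_basis(1) by simp
    next
      case 2
      show ?thesis
      proof (cases "a \<in> S")
        case True
        have "s \<inter> S = {y\<in>S. y < a}" using 2 by auto
        then show ?thesis using True order_top_basis(2)[of a S] by simp
      next
        case False
        show ?thesis
        proof (cases "\<forall>s\<in>S. s < a")
          case True
          then have "s \<inter> S = S" using 2 by auto
          then show ?thesis using order_top_basis(1) by simp
        next
          case nT: False
          then obtain t where t: "t \<in> S" "a \<le> t" by (meson not_less)
          have "s \<inter> S = {}"
          proof (rule ccontr)
            assume "s \<inter> S \<noteq> {}"
            then obtain y where "y \<in> S" "y < a" using 2 by auto
            then have "a \<in> S" using t conv unfolding is_interval_def by (meson less_imp_le)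
            then show False using False by simp
          qed
          then show ?thesis by simp
        qed
      qed
    next
      case 3
      show ?thesis
      proof (cases "a \<in> S")
        case True
        have "s \<inter> S = {y\<in>S. a < y}" using 3 by auto
        then show ?thesis using True order_top_basis(3)[of a S] by simp
      next
        case False
        show ?thesis
        proof (cases "\<forall>s\<in>S. a < s")
          case True
          then have "s \<inter> S = S" using 3 by auto
          then show ?thesis using order_top_basis(1) by simp
        next
          case nT: False
          then obtain t where t: "t \<in> S" "t \<le> a" by (meson not_less)
          have "s \<inter> S = {}"
          proof (rule ccontr)
            assume "s \<inter> S \<noteq> {}"
            then obtain y where "y \<in> S" "a < y" using 3 by auto
            then have "a \<in> S" using t conv unfolding is_interval_def by (meson less_imp_le)
            then show False using False by simp
          qed
          then show ?thesis by simp
        qed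
      qed
    qed
  qed
  then show "openin (order_top_on S) U" using T(2) by simp
qed

lemma topspace_tau_p [simp]: "topspace (tau_p S) = Aut_on S"
  unfolding tau_p_def pointwise_top_def topology_generated_by_topspace by auto

lemma tau_p_cont:
  "continuous_map X (tau_p S) f \<longleftrightarrow>
     f ` topspace X \<subseteq> Aut_on S \<and> (\<forall>x\<in>S. continuous_map X (order_top_on S) (\<lambda>p. f p x))"
proof -
  let ?B = "{Aut_on S} \<union> {{g\<in>Aut_on S. g x \<in> U} | x U. x \<in> S \<and> openin (order_top_on S) U}"
  have UB: "\<Union>?B = Aut_on S" by auto
  have "continuous_map X (tau_p S) f \<longleftrightarrow>
     (\<forall>U. U \<in> ?B \<longrightarrow> openin X (f-`U \<inter> topspace X)) \<and> f ` topspace X \<subseteq> Aut_on S"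
    unfolding tau_p_def pointwise_top_def continuous_on_generated_topo_iff UB ..
  also have "\<dots> \<longleftrightarrow> f ` topspace X \<subseteq> Aut_on S \<and> (\<forall>x\<in>S. continuous_map X (order_top_on S) (\<lambda>p. f p x))"
  proof
    assume L: "(\<forall>U. U \<in> ?B \<longrightarrow> openin X (f-`U \<inter> topspace X)) \<and> f ` topspace X \<subseteq> Aut_on S"
    then have A: "\<forall>U. U \<in> ?B \<longrightarrow> openin X (f-`U \<inter> topspace X)" and im: "f ` topspace X \<subseteq> Aut_on S"
      by blast+
    have "continuous_map X (order_top_on S) (\<lambda>p. f p x)" if x: "x \<in> S" for x
      unfolding continuous_map
    proof (intro conjI allI impI)
      show "(\<lambda>p. f p x) ` topspace X \<subseteq> topspace (order_top_on S)"
        using im x aut_in by auto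
    next
      fix U assume U: "openin (order_top_on S) U"
      have "{p \<in> topspace X. f p x \<in> U} = f -` {g\<in>Aut_on S. g x \<in> U} \<inter> topspace X"
        using im by auto
      moreover have "{g\<in>Aut_on S. g x \<in> U} \<in> ?B" using U x by blast
      then have "openin X (f -` {g\<in>Aut_on S. g x \<in> U} \<inter> topspace X)" using A by blast
      ultimately show "openin X {p \<in> topspace X. f p x \<in> U}" by simp
    qed
    then show "f ` topspace X \<subseteq> Aut_on S \<and> (\<forall>x\<in>S. continuous_map X (order_top_on S) (\<lambda>p. f p x))"
      using im by blast
  next
    assume R: "f ` topspace X \<subseteq> Aut_on S \<and> (\<forall>x\<in>S. continuous_map X (order_top_on S) (\<lambda>p. f p x))"
    then have im: "f ` topspace X \<subseteq> Aut_on S"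
      and C: "\<forall>x\<in>S. continuous_map X (order_top_on S) (\<lambda>p. f p x)" by blast+
    have "openin X (f -` U \<inter> topspace X)" if UB: "U \<in> ?B" for U
    proof (cases "U = Aut_on S")
      case True
      then have "f -` U \<inter> topspace X = topspace X" using im by auto
      then show ?thesis by simp
    next
      case False
      then obtain x V where xV: "U = {g\<in>Aut_on S. g x \<in> V}" "x \<in> S" "openin (order_top_on S) V"
        using UB by blast
      have "f -` U \<inter> topspace X = {p \<in> topspace X. f p x \<in> V}" using im xV(1) by auto
      moreover have "openin X {p \<in> topspace X. f p x \<in> V}"
        using C xV(2,3) unfolding continuous_map by blast
      ultimately show ?thesis by simp
    qed
    then show "(\<forall>U. U \<in> ?B \<longrightarrow> openin X (f-`U \<inter> topspace X)) \<and> f ` topspace X \<subseteq> Aut_on S"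
      using im by blast
  qed
  finally show ?thesis .
qed

lemma eval_cont_p:
  assumes "is_interval S" "x \<in> S"
  shows "continuous_map (tau_p S) (order_top_on UNIV) (\<lambda>a. a x)"
proof -
  have "continuous_map (tau_p S) (order_top_on S) (\<lambda>a. a x)"
    using tau_p_cont[of "tau_p S" S id] assms by simp
  then show ?thesis using order_top_sub[OF assms(1)] continuous_map_in_subtopology by metis
qed

lemma openin_tau_d: "openin (tau_d S) U \<longleftrightarrow> perm_open (Aut_on S) S U"
  unfolding tau_d_def using topology_inverse'[OF istopology_perm_open, of "Aut_on S" S] by simp

lemma perm_open_Aut: "perm_open (Aut_on S) S (Aut_on S)"
  unfolding perm_open_def by (auto intro!: exI[of _ "{}"] aut_comp)

lemma topspace_tau_d [simp]: "topspace (tau_d S) = Aut_on S"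
proof -
  have "topspace (tau_d S) = \<Union>{U. openin (tau_d S) U}" by (simp add: topspace_def)
  also have "\<dots> = Aut_on S" using perm_open_Aut[of S]
    unfolding openin_tau_d by (auto simp: perm_open_def)
  finally show ?thesis .
qed

lemma coset_open:
  assumes "g \<in> Aut_on S" "finite F" "F \<subseteq> S"
  shows "openin (tau_d S) ((\<lambda>h. g \<circ> h) ` {h\<in>Aut_on S. \<forall>x\<in>F. h x = x})"
  unfolding openin_tau_d perm_open_def
proof (intro conjI ballI)
  show "(\<circ>) g ` {h \<in> Aut_on S. \<forall>x\<in>F. h x = x} \<subseteq> Aut_on S" using assms aut_comp by blast
next
  fix g' assume "g' \<in> (\<circ>) g ` {h \<in> Aut_on S. \<forall>x\<in>F. h x = x}"
  then obtain h where h: "h \<in> Aut_on S" "\<forall>x\<in>F. h x = x" "g' = g \<circ> h" by blast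
  have "(\<circ>) g' ` {h \<in> Aut_on S. \<forall>x\<in>F. h x = x} \<subseteq> (\<circ>) g ` {h \<in> Aut_on S. \<forall>x\<in>F. h x = x}"
  proof
    fix k assume "k \<in> (\<circ>) g' ` {h \<in> Aut_on S. \<forall>x\<in>F. h x = x}"
    then obtain h' where h': "h' \<in> Aut_on S" "\<forall>x\<in>F. h' x = x" "k = g' \<circ> h'" by blast
    then have "k = g \<circ> (h \<circ> h')" "h \<circ> h' \<in> Aut_on S" "\<forall>x\<in>F. (h \<circ> h') x = x"
      using h aut_comp by (auto simp: o_assoc)
    then show "k \<in> (\<circ>) g ` {h \<in> Aut_on S. \<forall>x\<in>F. h x = x}" by blast
  qed
  then show "\<exists>F'. finite F' \<and> F' \<subseteq> S \<and> (\<lambda>h. g' \<circ> h) ` {h \<in> Aut_on S. \<forall>x\<in>F'. h x = x}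
     \<subseteq> (\<lambda>h. g \<circ> h) ` {h \<in> Aut_on S. \<forall>x\<in>F. h x = x}"
    by (intro exI[of _ F] conjI) (use assms in auto)
qed

lemma aut_UNIV_iff: "g \<in> Aut_on UNIV \<longleftrightarrow> bij g \<and> (\<forall>x y. x \<le> y \<longrightarrow> g x \<le> g y)"
  by (auto simp: Aut_on_def mono_on_def)

definition R :: "'a set \<Rightarrow> ('a \<Rightarrow> 'a) \<Rightarrow> 'a \<Rightarrow> 'a" where
  "R S g = (\<lambda>t. if t \<in> S then g t else t)"

lemma R_in: "t \<in> S \<Longrightarrow> R S g t = g t" and R_out: "t \<notin> S \<Longrightarrow> R S g t = t"
  by (simp_all add: R_def)

lemma R_aut:
  fixes S :: "'a::linorder set"
  assumes g: "g \<in> Aut_on UNIV" and pres: "\<And>t. g t \<in> S \<longleftrightarrow> t \<in> S"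
  shows "R S g \<in> Aut_on S"
proof -
  have "inj_on (R S g) S" using aut_inj[OF g] by (auto simp: inj_on_def R_def dest: injD)
  moreover have "R S g ` S = S"
  proof
    show "R S g ` S \<subseteq> S" using pres by (auto simp: R_def)
    show "S \<subseteq> R S g ` S"
    proof
      fix y assume y: "y \<in> S"
      have "inv g y \<in> S" using pres[of "inv g y"] aut_f_inv[OF g] y by simp
      moreover have "R S g (inv g y) = y" using calculation aut_f_inv[OF g] by (simp add: R_def)
      ultimately show "y \<in> R S g ` S" by (metis imageI)
    qed
  qed
  moreover have "mono_on S (R S g)" using g by (auto simp: mono_on_def R_def aut_UNIV_iff)
  moreover have "\<forall>x. x \<notin> S \<longrightarrow> R S g x = x" by (simp add: R_def)
  ultimately show ?thesis by (simp add: Aut_on_def bij_betw_def)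
qed

lemma R_comp: "(\<And>t. t \<in> S \<Longrightarrow> h t \<in> S) \<Longrightarrow> R S (g \<circ> h) = R S g \<circ> R S h"
  by (auto simp: R_def fun_eq_iff)

locale P51 =
  fixes J :: "'a::linorder set"
  assumes hom: "homogeneous_chain TYPE('a)" and reg: "regular_interval J"
    and prp: "proper_interval J" and ne: "J \<noteq> {}"
begin

abbreviation "Jm \<equiv> lower_part J"
abbreviation "Jp \<equiv> upper_part J"
abbreviation "H \<equiv> {g \<in> Aut_on (UNIV::'a set). \<forall>x\<in>J. g x \<in> J}"

definition M :: "('a \<Rightarrow> 'a) \<Rightarrow> ('a \<Rightarrow> 'a) \<Rightarrow> ('a \<Rightarrow> 'a) \<Rightarrow> 'a \<Rightarrow> 'a" where
  "M a b c = (\<lambda>t. if t \<in> Jm then a t else if t \<in> J then b t else c t)"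

lemma conv: "x \<in> J \<Longrightarrow> z \<in> J \<Longrightarrow> x \<le> y \<Longrightarrow> y \<le> z \<Longrightarrow> y \<in> J"
  using reg unfolding regular_interval_def is_interval_def by blast

lemma regJ: "g \<in> Aut_on UNIV \<Longrightarrow> x \<in> J \<Longrightarrow> g x \<in> J \<Longrightarrow> y \<in> J \<Longrightarrow> g y \<in> J"
  using reg unfolding regular_interval_def by blast

lemma part: "t \<in> Jm \<or> t \<in> J \<or> t \<in> Jp"
proof (rule ccontr)
  assume "\<not> ?thesis"
  then obtain x z where "x \<in> J" "z \<in> J" "\<not> t < x" "\<not> z < t" "t \<notin> J"
    by (auto simp: lower_part_def upper_part_def)
  then show False using conv[of x z t] by (simp add: not_less)
qed

lemma ord_mJ: "u \<in> Jm \<Longrightarrow> v \<in> J \<Longrightarrow> u < v" by (simp add: lower_part_def)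
lemma ord_Jp: "u \<in> J \<Longrightarrow> v \<in> Jp \<Longrightarrow> u < v" by (simp add: upper_part_def)
lemma ord_mp: "u \<in> Jm \<Longrightarrow> v \<in> Jp \<Longrightarrow> u < v"
  using ne ord_mJ ord_Jp by (meson ex_in_conv order.strict_trans)

lemma disj: "t \<in> Jm \<Longrightarrow> t \<notin> J" "t \<in> Jm \<Longrightarrow> t \<notin> Jp" "t \<in> Jp \<Longrightarrow> t \<notin> J"
  using ord_mJ ord_Jp ord_mp by blast+

lemma interval_J: "is_interval J" using reg by (simp add: regular_interval_def)
lemma interval_Jm: "is_interval Jm" by (auto simp: is_interval_def lower_part_def)
lemma interval_Jp: "is_interval Jp" by (auto simp: is_interval_def upper_part_def)

lemma no_max: assumes x: "x \<in> J" shows "\<exists>b\<in>J. x < b"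
proof (rule ccontr)
  assume "\<not> ?thesis"
  then have mx: "\<forall>y\<in>J. y \<le> x" by (meson not_le)
  obtain y where y: "y \<in> J" "y \<noteq> x" using prp x unfolding proper_interval_def by blast
  then have yx: "y < x" using mx by (simp add: order.not_eq_order_implies_strict)
  obtain g where g: "g \<in> Aut_on UNIV" "g y = x" using hom unfolding homogeneous_chain_def by blast
  have "g x \<in> J" using regJ[OF g(1) y(1)] g(2) x by simp
  then have "g x \<le> x" using mx by blast
  moreover have "g y < g x" using aut_less[OF g(1), of y x] yx by simp
  ultimately show False using g(2) by simp
qed

lemma no_min: assumes x: "x \<in> J" shows "\<exists>a\<in>J. a < x"
proof (rule ccontr)
  assume "\<not> ?thesis"
  then have mx: "\<forall>y\<in>J. x \<le> y" by (meson not_le)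
  obtain y where y: "y \<in> J" "y \<noteq> x" using prp x unfolding proper_interval_def by blast
  then have yx: "x < y" using mx by (simp add: order.not_eq_order_implies_strict)
  obtain g where g: "g \<in> Aut_on UNIV" "g y = x" using hom unfolding homogeneous_chain_def by blast
  have "g x \<in> J" using regJ[OF g(1) y(1)] g(2) x by simp
  then have "x \<le> g x" using mx by blast
  moreover have "g x < g y" using aut_less[OF g(1), of x y] yx by simp
  ultimately show False using g(2) by simp
qed

lemma J_open: "openin (order_top_on UNIV) J"
proof -
  have eq: "J = \<Union>{{y. a < y} \<inter> {y. y < b} | a b. a \<in> J \<and> b \<in> J}"
  proof
    show "J \<subseteq> \<Union>{{y. a < y} \<inter> {y. y < b} | a b. a \<in> J \<and> b \<in> J}"
    proof
      fix x assume x: "x \<in> J"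
      obtain a b where "a \<in> J" "b \<in> J" "a < x" "x < b" using no_max[OF x] no_min[OF x] by blast
      then show "x \<in> \<Union>{{y. a < y} \<inter> {y. y < b} | a b. a \<in> J \<and> b \<in> J}" by blast
    qed
    show "\<Union>{{y. a < y} \<inter> {y. y < b} | a b. a \<in> J \<and> b \<in> J} \<subseteq> J"
      using conv by (auto intro: less_imp_le)
  qed
  have "openin (order_top_on UNIV) (\<Union>{{y. a < y} \<inter> {y. y < b} | a b. a \<in> J \<and> b \<in> J})"
    by (rule openin_Union) (auto intro!: openin_Int order_top_UNIV_basis)
  then show ?thesis using eq by simp
qed

lemma H_inv: assumes g: "g \<in> H" shows "inv g \<in> H"
proof -
  obtain x0 where x0: "x0 \<in> J" using ne by blast
  have gi: "inv g \<in> Aut_on UNIV" using g aut_inv by blast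
  have "inv g (g x0) \<in> J" using aut_inv_f[of g UNIV x0] g x0 by simp
  then have "\<forall>y\<in>J. inv g y \<in> J" using regJ[OF gi, of "g x0"] g x0 by blast
  then show ?thesis using gi by simp
qed

lemma H_J: "g \<in> H \<Longrightarrow> g t \<in> J \<longleftrightarrow> t \<in> J"
  using H_inv[of g] aut_inv_f[of g UNIV t] by (metis (mono_tags, lifting) mem_Collect_eq)

lemma H_Jm1: assumes g: "g \<in> H" and t: "t \<in> Jm" shows "g t \<in> Jm"
proof -
  obtain x0 where x0: "x0 \<in> J" using ne by blast
  have "g t \<notin> J" using H_J[OF g] disj(1)[OF t] by simp
  moreover have "g t < g x0" using aut_less[of g UNIV t x0] g ord_mJ[OF t x0] by simp
  then have "g t \<notin> Jp" using ord_Jp[of "g x0" "g t"] g x0 by auto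
  ultimately show ?thesis using part by blast
qed

lemma H_Jp1: assumes g: "g \<in> H" and t: "t \<in> Jp" shows "g t \<in> Jp"
proof -
  obtain x0 where x0: "x0 \<in> J" using ne by blast
  have "g t \<notin> J" using H_J[OF g] disj(3)[OF t] by simp
  moreover have "g x0 < g t" using aut_less[of g UNIV x0 t] g ord_Jp[OF x0 t] by simp
  then have "g t \<notin> Jm" using ord_mJ[of "g t" "g x0"] g x0 by auto
  ultimately show ?thesis using part by blast
qed

lemma H_Jm: "g \<in> H \<Longrightarrow> g t \<in> Jm \<longleftrightarrow> t \<in> Jm"
  using H_Jm1 H_inv[of g] aut_inv_f[of g UNIV t] by (metis (no_types, lifting) mem_Collect_eq)

lemma H_Jp: "g \<in> H \<Longrightarrow> g t \<in> Jp \<longleftrightarrow> t \<in> Jp"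
  using H_Jp1 H_inv[of g] aut_inv_f[of g UNIV t] by (metis (no_types, lifting) mem_Collect_eq)

end

context P51 begin

lemma M_m: "t \<in> Jm \<Longrightarrow> M a b c t = a t" by (simp add: M_def)
lemma M_J: "t \<in> J \<Longrightarrow> M a b c t = b t" using disj by (auto simp: M_def)
lemma M_p: "t \<in> Jp \<Longrightarrow> M a b c t = c t" using disj by (auto simp: M_def)

lemma M_H:
  assumes a: "a \<in> Aut_on Jm" and b: "b \<in> Aut_on J" and c: "c \<in> Aut_on Jp"
  shows "M a b c \<in> H"
proof -
  let ?m = "M a b c"
  have i1: "?m t \<in> Jm" if "t \<in> Jm" for t using that M_m aut_in[OF a] by simp
  have i2: "?m t \<in> J" if "t \<in> J" for t using that M_J aut_in[OF b] by simp
  have i3: "?m t \<in> Jp" if "t \<in> Jp" for t using that M_p aut_in[OF c] by simp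
  have s: "?m x < ?m y" if xy: "x < y" for x y
  proof -
    have c11: "?thesis" if "x \<in> Jm" "y \<in> Jm" using that xy aut_less[OF a] M_m by simp
    have c22: "?thesis" if "x \<in> J" "y \<in> J" using that xy aut_less[OF b] M_J by simp
    have c33: "?thesis" if "x \<in> Jp" "y \<in> Jp" using that xy aut_less[OF c] M_p by simp
    have c12: "?thesis" if "x \<in> Jm" "y \<in> J" using that i1 i2 ord_mJ by blast
    have c13: "?thesis" if "x \<in> Jm" "y \<in> Jp" using that i1 i3 ord_mp by blast
    have c23: "?thesis" if "x \<in> J" "y \<in> Jp" using that i2 i3 ord_Jp by blast
    have n21: "\<not> (x \<in> J \<and> y \<in> Jm)" using xy ord_mJ[of y x] by auto
    have n31: "\<not> (x \<in> Jp \<and> y \<in> Jm)" using xy ord_mp[of y x] by auto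
    have n32: "\<not> (x \<in> Jp \<and> y \<in> J)" using xy ord_Jp[of y x] by auto
    show ?thesis using part[of x] part[of y] c11 c22 c33 c12 c13 c23 n21 n31 n32 by blast
  qed
  have mono: "?m x \<le> ?m y" if "x \<le> y" for x y
    using s that by (metis order.order_iff_strict)
  have inj: "inj ?m"
  proof (rule injI)
    fix x y assume "?m x = ?m y"
    then show "x = y" using s by (metis less_irrefl linorder_neqE)
  qed
  have surj: "y \<in> range ?m" for y
  proof -
    have ?thesis if "y \<in> Jm"
    proof -
      have "inv a y \<in> Jm" using that aut_in[OF aut_inv[OF a]] by blast
      then have "?m (inv a y) = y" using M_m aut_f_inv[OF a] by simp
      then show ?thesis by (metis rangeI)
    qed
    moreover have ?thesis if "y \<in> J"
    proof -
      have "inv b y \<in> J" using that aut_in[OF aut_inv[OF b]] by blast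
      then have "?m (inv b y) = y" using M_J aut_f_inv[OF b] by simp
      then show ?thesis by (metis rangeI)
    qed
    moreover have ?thesis if "y \<in> Jp"
    proof -
      have "inv c y \<in> Jp" using that aut_in[OF aut_inv[OF c]] by blast
      then have "?m (inv c y) = y" using M_p aut_f_inv[OF c] by simp
      then show ?thesis by (metis rangeI)
    qed
    ultimately show ?thesis using part by blast
  qed
  have "surj ?m" using surj by blast
  then have "bij ?m" using inj by (simp add: bij_def)
  then have "?m \<in> Aut_on UNIV" using mono by (simp add: aut_UNIV_iff)
  then show ?thesis using i2 by simp
qed

lemma M_R: "g \<in> H \<Longrightarrow> M (R Jm g) (R J g) (R Jp g) = g"
proof (rule ext)
  fix t assume g: "g \<in> H"
  show "M (R Jm g) (R J g) (R Jp g) t = g t"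
    using part[of t] by (auto simp: M_m M_J M_p R_in)
qed

lemma R_M:
  assumes a: "a \<in> Aut_on Jm" and b: "b \<in> Aut_on J" and c: "c \<in> Aut_on Jp"
  shows "R Jm (M a b c) = a" "R J (M a b c) = b" "R Jp (M a b c) = c"
proof -
  show "R Jm (M a b c) = a" by (rule ext) (simp add: R_def M_m aut_out[OF a])
  show "R J (M a b c) = b" by (rule ext) (simp add: R_def M_J aut_out[OF b])
  show "R Jp (M a b c) = c" by (rule ext) (simp add: R_def M_p aut_out[OF c])
qed

lemma M_comp:
  assumes "a' \<in> Aut_on Jm" "b' \<in> Aut_on J" "c' \<in> Aut_on Jp"
  shows "M (a \<circ> a') (b \<circ> b') (c \<circ> c') = M a b c \<circ> M a' b' c'"
proof (rule ext)
  fix t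
  show "M (a \<circ> a') (b \<circ> b') (c \<circ> c') t = (M a b c \<circ> M a' b' c') t"
    using part[of t] by (auto simp: M_m M_J M_p aut_in assms)
qed

lemma abc_M:
  assumes a: "a \<in> Aut_on Jm" and b: "b \<in> Aut_on J" and c: "c \<in> Aut_on Jp"
  shows "a \<circ> b \<circ> c = M a b c"
proof (rule ext)
  fix t
  have "(a \<circ> b \<circ> c) t = M a b c t" if "t \<in> Jm"
  proof -
    have "c t = t" "b t = t" using that disj aut_out b c by metis+
    then show ?thesis using that M_m by simp
  qed
  moreover have "(a \<circ> b \<circ> c) t = M a b c t" if "t \<in> J"
  proof -
    have "c t = t" "b t \<in> J" using that disj aut_out aut_in b c by metis+
    moreover have "a (b t) = b t" using calculation(2) disj aut_out a by metis
    ultimately show ?thesis using that M_J by simp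
  qed
  moreover have "(a \<circ> b \<circ> c) t = M a b c t" if "t \<in> Jp"
  proof -
    have "c t \<in> Jp" using that aut_in c by metis
    moreover have "b (c t) = c t" "a (c t) = c t" using calculation disj aut_out a b by metis+
    ultimately show ?thesis using that M_p by simp
  qed
  ultimately show "(a \<circ> b \<circ> c) t = M a b c t" using part by blast
qed

lemma H_aut: assumes g: "g \<in> H" shows "R Jm g \<in> Aut_on Jm \<and> R J g \<in> Aut_on J \<and> R Jp g \<in> Aut_on Jp"
proof -
  have g': "g \<in> Aut_on UNIV" using g by simp
  show ?thesis
    by (intro conjI R_aut[OF g']) (simp_all only: H_Jm[OF g] H_J[OF g] H_Jp[OF g])
qed

lemma H_hom: assumes g: "g \<in> H" and h: "h \<in> H" shows
   "R Jm (g \<circ> h) = R Jm g \<circ> R Jm h \<and> R J (g \<circ> h) = R J g \<circ> R J h \<and> R Jp (g \<circ> h) = R Jp g \<circ> R Jp h"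
  by (intro conjI R_comp) (simp_all only: H_Jm[OF h] H_J[OF h] H_Jp[OF h])

end

context P51 begin

lemma H_eq: "x0 \<in> J \<Longrightarrow> H = {g\<in>Aut_on UNIV. g x0 \<in> J}"
  using regJ by blast

lemma H_sub: "is_subgroup_of H (Aut_on UNIV)"
  unfolding is_subgroup_of_def
  using aut_id aut_comp H_inv by (auto simp: aut_id aut_comp)

lemma H_open_p: "openin (tau_p UNIV) H"
proof -
  obtain x0 where x0: "x0 \<in> J" using ne by blast
  show ?thesis unfolding tau_p_def pointwise_top_def
    by (rule topology_generated_by_Basis) (use H_eq[OF x0] J_open in blast)
qed

lemma H_open_d: "openin (tau_d UNIV) H"
proof -
  obtain x0 where x0: "x0 \<in> J" using ne by blast
  show ?thesis unfolding openin_tau_d perm_open_def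
  proof (intro conjI ballI)
    show "H \<subseteq> Aut_on UNIV" by blast
  next
    fix g assume g: "g \<in> H"
    have "(\<lambda>h. g \<circ> h) ` {h \<in> Aut_on UNIV. \<forall>x\<in>{x0}. h x = x} \<subseteq> H"
    proof
      fix k assume "k \<in> (\<lambda>h. g \<circ> h) ` {h \<in> Aut_on UNIV. \<forall>x\<in>{x0}. h x = x}"
      then obtain h where h: "h \<in> Aut_on UNIV" "h x0 = x0" "k = g \<circ> h" by auto
      then have "k \<in> Aut_on UNIV" "k x0 \<in> J" using g aut_comp x0 by auto
      then show "k \<in> H" using H_eq[OF x0] by blast
    qed
    then show "\<exists>F. finite F \<and> F \<subseteq> UNIV \<and> (\<lambda>h. g \<circ> h) ` {h \<in> Aut_on UNIV. \<forall>x\<in>F. h x = x} \<subseteq> H"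
      by (intro exI[of _ "{x0}"]) auto
  qed
qed

definition phi :: "('a \<Rightarrow> 'a) \<Rightarrow> ('a \<Rightarrow> 'a) \<times> ('a \<Rightarrow> 'a) \<times> ('a \<Rightarrow> 'a)" where
  "phi g = (R Jm g, R J g, R Jp g)"

definition psi :: "('a \<Rightarrow> 'a) \<times> ('a \<Rightarrow> 'a) \<times> ('a \<Rightarrow> 'a) \<Rightarrow> 'a \<Rightarrow> 'a" where
  "psi p = M (fst p) (fst (snd p)) (snd (snd p))"

lemma iso_gen:
  assumes T: "H \<subseteq> topspace T" and TA: "topspace TA = Aut_on Jm" and TB: "topspace TB = Aut_on J"
    and TC: "topspace TC = Aut_on Jp"
    and c1: "continuous_map (subtopology T H) (prod_topology TA (prod_topology TB TC)) phi"
    and c2: "continuous_map (prod_topology TA (prod_topology TB TC)) (subtopology T H) psi"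
  shows "top_group_iso3 H T TA TB TC phi"
  unfolding top_group_iso3_def
proof (intro conjI ballI)
  show "homeomorphic_map (subtopology T H) (prod_topology TA (prod_topology TB TC)) phi"
    unfolding homeomorphic_map_maps
  proof (intro exI[of _ psi])
    show "homeomorphic_maps (subtopology T H) (prod_topology TA (prod_topology TB TC)) phi psi"
      unfolding homeomorphic_maps_def
    proof (intro conjI c1 c2 ballI)
      fix g assume "g \<in> topspace (subtopology T H)"
      then have "g \<in> H" by simp
      then show "psi (phi g) = g" by (simp add: psi_def phi_def M_R)
    next
      fix p assume "p \<in> topspace (prod_topology TA (prod_topology TB TC))"
      then have "fst p \<in> Aut_on Jm" "fst (snd p) \<in> Aut_on J" "snd (snd p) \<in> Aut_on Jp"
        using TA TB TC by (auto simp: mem_Times_iff)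
      then show "phi (psi p) = p" by (simp add: psi_def phi_def R_M)
    qed
  qed
next
  fix g h assume "g \<in> H" "h \<in> H"
  then show "phi (g \<circ> h) = (fst (phi g) \<circ> fst (phi h), fst (snd (phi g)) \<circ> fst (snd (phi h)),
         snd (snd (phi g)) \<circ> snd (snd (phi h)))"
    using H_hom by (simp add: phi_def)
qed

lemma R_cont_p:
  assumes S: "is_interval S" and pres: "\<And>g t. g \<in> H \<Longrightarrow> g t \<in> S \<longleftrightarrow> t \<in> S"
    and aut: "\<And>g. g \<in> H \<Longrightarrow> R S g \<in> Aut_on S"
  shows "continuous_map (subtopology (tau_p UNIV) H) (tau_p S) (R S)"
  unfolding tau_p_cont
proof (intro conjI ballI)
  show "R S ` topspace (subtopology (tau_p UNIV) H) \<subseteq> Aut_on S" using aut by auto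
next
  fix x assume x: "x \<in> S"
  have "continuous_map (tau_p UNIV) (order_top_on UNIV) (\<lambda>a. a x)"
    by (rule eval_cont_p) (auto simp: is_interval_def)
  then have c: "continuous_map (subtopology (tau_p UNIV) H) (order_top_on UNIV) (\<lambda>a. a x)"
    by (rule continuous_map_from_subtopology)
  have "continuous_map (subtopology (tau_p UNIV) H) (subtopology (order_top_on UNIV) S) (\<lambda>a. a x)"
    unfolding continuous_map_in_subtopology using c pres x by auto
  then have "continuous_map (subtopology (tau_p UNIV) H) (order_top_on S) (\<lambda>a. a x)"
    using order_top_sub[OF S] by simp
  then show "continuous_map (subtopology (tau_p UNIV) H) (order_top_on S) (\<lambda>p. R S p x)"
    by (rule continuous_map_eq) (simp add: R_in x)
qed

lemma phi_cont_p:
  "continuous_map (subtopology (tau_p UNIV) H) (prod_topology (tau_p Jm) (prod_topology (tau_p J) (tau_p Jp))) phi"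
proof -
  have "continuous_map (subtopology (tau_p UNIV) H) (prod_topology (tau_p Jm) (prod_topology (tau_p J) (tau_p Jp)))
     (\<lambda>g. (R Jm g, R J g, R Jp g))"
    by (intro continuous_map_pairedI R_cont_p interval_Jm interval_J interval_Jp)
      (use H_Jm H_J H_Jp H_aut in auto)
  then show ?thesis unfolding phi_def by simp
qed

lemma psi_cont_p:
  "continuous_map (prod_topology (tau_p Jm) (prod_topology (tau_p J) (tau_p Jp))) (subtopology (tau_p UNIV) H) psi"
  unfolding continuous_map_in_subtopology
proof
  let ?P = "prod_topology (tau_p Jm) (prod_topology (tau_p J) (tau_p Jp))"
  have im: "psi p \<in> H" if "p \<in> topspace ?P" for p
    using that M_H by (auto simp: psi_def mem_Times_iff)
  then show "psi \<in> topspace ?P \<rightarrow> H" by blast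
  show "continuous_map ?P (tau_p UNIV) psi"
    unfolding tau_p_cont
  proof (intro conjI ballI)
    show "psi ` topspace ?P \<subseteq> Aut_on UNIV" using im by blast
  next
    fix x :: 'a
    have c: "continuous_map ?P (order_top_on UNIV) (\<lambda>p. psi p x)"
    proof -
      have "x \<in> Jm \<or> x \<in> J \<or> x \<in> Jp" using part .
      moreover have ?thesis if xm: "x \<in> Jm"
      proof -
        have "continuous_map ?P (order_top_on UNIV) ((\<lambda>a. a x) \<circ> fst)"
          by (intro continuous_map_compose[OF continuous_map_fst] eval_cont_p interval_Jm xm)
        then show ?thesis
          by (rule continuous_map_eq) (simp add: psi_def M_m xm)
      qed
      moreover have ?thesis if xm: "x \<in> J"
      proof -
        have "continuous_map ?P (order_top_on UNIV) ((\<lambda>a. a x) \<circ> fst \<circ> snd)"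
          by (intro continuous_map_compose[OF continuous_map_snd] continuous_map_compose[OF continuous_map_fst]
              eval_cont_p interval_J xm)
        then show ?thesis
          by (rule continuous_map_eq) (simp add: psi_def M_J xm)
      qed
      moreover have ?thesis if xm: "x \<in> Jp"
      proof -
        have "continuous_map ?P (order_top_on UNIV) ((\<lambda>a. a x) \<circ> snd \<circ> snd)"
          by (intro continuous_map_compose[OF continuous_map_snd] continuous_map_compose[OF continuous_map_snd]
              eval_cont_p interval_Jp xm)
        then show ?thesis
          by (rule continuous_map_eq) (simp add: psi_def M_p xm)
      qed
      ultimately show ?thesis by blast
    qed
    then show "continuous_map ?P (order_top_on UNIV) (\<lambda>p. psi p x)" .
  qed
qed

end

context P51 begin

lemma R_cont_d:
  assumes pres: "\<And>g t. g \<in> H \<Longrightarrow> g t \<in> S \<longleftrightarrow> t \<in> S"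
    and aut: "\<And>g. g \<in> H \<Longrightarrow> R S g \<in> Aut_on S"
  shows "continuous_map (subtopology (tau_d UNIV) H) (tau_d S) (R S)"
  unfolding continuous_map
proof (intro conjI allI impI)
  show "R S ` topspace (subtopology (tau_d UNIV) H) \<subseteq> topspace (tau_d S)" using aut by auto
next
  fix U assume "openin (tau_d S) U"
  then have U: "perm_open (Aut_on S) S U" by (simp add: openin_tau_d)
  obtain x0 where x0: "x0 \<in> J" using ne by blast
  let ?W = "{g\<in>H. R S g \<in> U}"
  have "perm_open (Aut_on UNIV) UNIV ?W"
    unfolding perm_open_def
  proof (intro conjI ballI)
    show "?W \<subseteq> Aut_on UNIV" by blast
  next
    fix g assume g: "g \<in> ?W"
    then obtain F where F: "finite F" "F \<subseteq> S"
      "(\<lambda>h. R S g \<circ> h) ` {h\<in>Aut_on S. \<forall>x\<in>F. h x = x} \<subseteq> U"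
      using U unfolding perm_open_def by blast
    have "(\<lambda>h. g \<circ> h) ` {h\<in>Aut_on UNIV. \<forall>x\<in>insert x0 F. h x = x} \<subseteq> ?W"
    proof
      fix k assume "k \<in> (\<lambda>h. g \<circ> h) ` {h\<in>Aut_on UNIV. \<forall>x\<in>insert x0 F. h x = x}"
      then obtain h where h: "h \<in> Aut_on UNIV" "\<forall>x\<in>insert x0 F. h x = x" "k = g \<circ> h" by blast
      have hH: "h \<in> H" using h H_eq[OF x0] x0 by auto
      have kH: "k \<in> H" using hH g h(3) H_sub unfolding is_subgroup_of_def by blast
      have "R S k = R S g \<circ> R S h" using h(3) R_comp pres[OF hH] by metis
      moreover have "R S h \<in> Aut_on S" using aut[OF hH] .
      moreover have "\<forall>x\<in>F. R S h x = x" using h(2) F(2) by (auto simp: R_def)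
      ultimately have "R S k \<in> U" using F(3) by blast
      then show "k \<in> ?W" using kH by blast
    qed
    then show "\<exists>F. finite F \<and> F \<subseteq> UNIV \<and> (\<lambda>h. g \<circ> h) ` {h\<in>Aut_on UNIV. \<forall>x\<in>F. h x = x} \<subseteq> ?W"
      using F(1) by (intro exI[of _ "insert x0 F"]) auto
  qed
  then have "openin (tau_d UNIV) ?W" by (simp add: openin_tau_d)
  moreover have "{x \<in> topspace (subtopology (tau_d UNIV) H). R S x \<in> U} = ?W \<inter> H" by auto
  ultimately show "openin (subtopology (tau_d UNIV) H) {x \<in> topspace (subtopology (tau_d UNIV) H). R S x \<in> U}"
    unfolding openin_subtopology by blast
qed

lemma phi_cont_d:
  "continuous_map (subtopology (tau_d UNIV) H) (prod_topology (tau_d Jm) (prod_topology (tau_d J) (tau_d Jp))) phi"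
proof -
  have "continuous_map (subtopology (tau_d UNIV) H) (prod_topology (tau_d Jm) (prod_topology (tau_d J) (tau_d Jp)))
     (\<lambda>g. (R Jm g, R J g, R Jp g))"
    by (intro continuous_map_pairedI R_cont_d)
      (use H_Jm H_J H_Jp H_aut in auto)
  then show ?thesis unfolding phi_def by simp
qed

lemma psi_cont_d:
  "continuous_map (prod_topology (tau_d Jm) (prod_topology (tau_d J) (tau_d Jp))) (subtopology (tau_d UNIV) H) psi"
  unfolding continuous_map_in_subtopology
proof
  let ?P = "prod_topology (tau_d Jm) (prod_topology (tau_d J) (tau_d Jp))"
  have im: "psi p \<in> H" if "p \<in> topspace ?P" for p
    using that M_H by (auto simp: psi_def mem_Times_iff)
  then show "psi \<in> topspace ?P \<rightarrow> H" by blast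
  show "continuous_map ?P (tau_d UNIV) psi"
    unfolding continuous_map
  proof (intro conjI allI impI)
    show "psi ` topspace ?P \<subseteq> topspace (tau_d UNIV)" using im by auto
  next
    fix U :: "('a \<Rightarrow> 'a) set" assume "openin (tau_d UNIV) U"
    then have U: "perm_open (Aut_on UNIV) UNIV U" by (simp add: openin_tau_d)
    show "openin ?P {p \<in> topspace ?P. psi p \<in> U}"
    proof (rule openin_prod_topology_alt[THEN iffD2], intro allI impI)
      fix a q assume aq: "(a, q) \<in> {p \<in> topspace ?P. psi p \<in> U}"
      obtain b c where q: "q = (b, c)" by fastforce
      have a: "a \<in> Aut_on Jm" and b: "b \<in> Aut_on J" and c: "c \<in> Aut_on Jp" and abc: "M a b c \<in> U"
        using aq q by (auto simp: psi_def)
      obtain F where F: "finite F"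
        "(\<lambda>h. M a b c \<circ> h) ` {h\<in>Aut_on UNIV. \<forall>x\<in>F. h x = x} \<subseteq> U"
        using U abc unfolding perm_open_def by blast
      define A' where "A' = (\<lambda>h. a \<circ> h) ` {h\<in>Aut_on Jm. \<forall>x\<in>F \<inter> Jm. h x = x}"
      define B' where "B' = (\<lambda>h. b \<circ> h) ` {h\<in>Aut_on J. \<forall>x\<in>F \<inter> J. h x = x}"
      define C' where "C' = (\<lambda>h. c \<circ> h) ` {h\<in>Aut_on Jp. \<forall>x\<in>F \<inter> Jp. h x = x}"
      have oA: "openin (tau_d Jm) A'" unfolding A'_def by (rule coset_open) (use a F in auto)
      have oB: "openin (tau_d J) B'" unfolding B'_def by (rule coset_open) (use b F in auto)
      have oC: "openin (tau_d Jp) C'" unfolding C'_def by (rule coset_open) (use c F in auto)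
      have aA: "a \<in> A'" unfolding A'_def using aut_id by (auto intro!: image_eqI[of _ _ id])
      have bB: "b \<in> B'" unfolding B'_def using aut_id by (auto intro!: image_eqI[of _ _ id])
      have cC: "c \<in> C'" unfolding C'_def using aut_id by (auto intro!: image_eqI[of _ _ id])
      have sub: "A' \<times> (B' \<times> C') \<subseteq> {p \<in> topspace ?P. psi p \<in> U}"
      proof
        fix p assume "p \<in> A' \<times> (B' \<times> C')"
        then obtain ha hb hc where
          ha: "ha \<in> Aut_on Jm" "\<forall>x\<in>F \<inter> Jm. ha x = x" and
          hb: "hb \<in> Aut_on J" "\<forall>x\<in>F \<inter> J. hb x = x" and
          hc: "hc \<in> Aut_on Jp" "\<forall>x\<in>F \<inter> Jp. hc x = x" and
          p: "p = (a \<circ> ha, b \<circ> hb, c \<circ> hc)"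
          unfolding A'_def B'_def C'_def by blast
        have tp: "p \<in> topspace ?P" using p a b c ha hb hc aut_comp by auto
        have hH: "M ha hb hc \<in> H" using M_H ha hb hc by blast
        have fixF: "\<forall>x\<in>F. M ha hb hc x = x"
          using part ha(2) hb(2) hc(2) M_m M_J M_p by (metis IntI)
        have "psi p = M a b c \<circ> M ha hb hc" using p M_comp[OF ha(1) hb(1) hc(1)] by (simp add: psi_def)
        then have "psi p \<in> U" using F(2) hH fixF by blast
        then show "p \<in> {p \<in> topspace ?P. psi p \<in> U}" using tp by blast
      qed
      have oBC: "openin (prod_topology (tau_d J) (tau_d Jp)) (B' \<times> C')"
        using oB oC by (simp add: openin_prod_Times_iff)
      show "\<exists>U' V. openin (tau_d Jm) U' \<and> openin (prod_topology (tau_d J) (tau_d Jp)) V \<and>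
             a \<in> U' \<and> q \<in> V \<and> U' \<times> V \<subseteq> {p \<in> topspace ?P. psi p \<in> U}"
        using q bB cC by (intro exI[of _ A'] exI[of _ "B' \<times> C'"] conjI oA oBC aA sub) auto
    qed
  qed
qed

lemma stab:
  assumes x: "x \<in> J"
  shows "{g \<in> Aut_on UNIV. g x = x} =
     {a \<circ> b \<circ> c | a b c. a \<in> Aut_on Jm \<and> b \<in> {b' \<in> Aut_on J. b' x = x} \<and> c \<in> Aut_on Jp}"
proof
  show "{g \<in> Aut_on UNIV. g x = x} \<subseteq>
     {a \<circ> b \<circ> c | a b c. a \<in> Aut_on Jm \<and> b \<in> {b' \<in> Aut_on J. b' x = x} \<and> c \<in> Aut_on Jp}"
  proof
    fix g assume "g \<in> {g \<in> Aut_on UNIV. g x = x}"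
    then have g: "g \<in> Aut_on UNIV" "g x = x" by auto
    then have gH: "g \<in> H" using H_eq[OF x] x by auto
    have "R Jm g \<circ> R J g \<circ> R Jp g = g" using H_aut[OF gH] abc_M M_R[OF gH] by metis
    moreover have "R J g x = x" using g x R_in by metis
    ultimately have "\<exists>a b c. g = a \<circ> b \<circ> c \<and> a \<in> Aut_on Jm \<and> b \<in> {b' \<in> Aut_on J. b' x = x} \<and> c \<in> Aut_on Jp"
      using H_aut[OF gH] by (intro exI[of _ "R Jm g"] exI[of _ "R J g"] exI[of _ "R Jp g"]) auto
    then show "g \<in> {a \<circ> b \<circ> c | a b c. a \<in> Aut_on Jm \<and> b \<in> {b' \<in> Aut_on J. b' x = x} \<and> c \<in> Aut_on Jp}"
      by simp
  qed
next
  show "{a \<circ> b \<circ> c | a b c. a \<in> Aut_on Jm \<and> b \<in> {b' \<in> Aut_on J. b' x = x} \<and> c \<in> Aut_on Jp}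
      \<subseteq> {g \<in> Aut_on UNIV. g x = x}"
  proof
    fix g assume "g \<in> {a \<circ> b \<circ> c | a b c. a \<in> Aut_on Jm \<and> b \<in> {b' \<in> Aut_on J. b' x = x} \<and> c \<in> Aut_on Jp}"
    then obtain a b c where abc: "a \<in> Aut_on Jm" "b \<in> Aut_on J" "b x = x" "c \<in> Aut_on Jp" "g = a \<circ> b \<circ> c"
      by blast
    then have "g = M a b c" using abc_M by blast
    then show "g \<in> {g \<in> Aut_on UNIV. g x = x}" using M_H[OF abc(1,2,4)] M_J[OF x] abc(3) by auto
  qed
qed

lemma main:
  "is_subgroup_of H (Aut_on UNIV) \<and> openin (tau_p UNIV) H \<and> openin (tau_d UNIV) H
      \<and> (\<exists>\<phi>. top_group_iso3 H (tau_p UNIV) (tau_p Jm) (tau_p J) (tau_p Jp) \<phi>)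
      \<and> (\<exists>\<phi>. top_group_iso3 H (tau_d UNIV) (tau_d Jm) (tau_d J) (tau_d Jp) \<phi>)
      \<and> (\<forall>x\<in>J. {g \<in> Aut_on UNIV. g x = x} =
           {a \<circ> b \<circ> c | a b c. a \<in> Aut_on Jm \<and> b \<in> {b' \<in> Aut_on J. b' x = x} \<and> c \<in> Aut_on Jp})"
proof (intro conjI H_sub H_open_p H_open_d ballI stab)
  show "\<exists>\<phi>. top_group_iso3 H (tau_p UNIV) (tau_p Jm) (tau_p J) (tau_p Jp) \<phi>"
    by (rule exI, rule iso_gen[OF _ _ _ _ phi_cont_p psi_cont_p]) auto
  show "\<exists>\<phi>. top_group_iso3 H (tau_d UNIV) (tau_d Jm) (tau_d J) (tau_d Jp) \<phi>"
    by (rule exI, rule iso_gen[OF _ _ _ _ phi_cont_d psi_cont_d]) auto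
qed

end

lemma main_global:
  fixes J :: "'a::linorder set"
  assumes "homogeneous_chain TYPE('a)"
    and "regular_interval J" and "proper_interval J" and "J \<noteq> {}"
  shows "is_subgroup_of {g \<in> Aut_on (UNIV::'a set). \<forall>x\<in>J. g x \<in> J} (Aut_on UNIV)
      \<and> openin (tau_p UNIV) {g \<in> Aut_on (UNIV::'a set). \<forall>x\<in>J. g x \<in> J}
      \<and> openin (tau_d UNIV) {g \<in> Aut_on (UNIV::'a set). \<forall>x\<in>J. g x \<in> J}
      \<and> (\<exists>\<phi>. top_group_iso3 {g \<in> Aut_on (UNIV::'a set). \<forall>x\<in>J. g x \<in> J} (tau_p UNIV) (tau_p (lower_part J)) (tau_p J) (tau_p (upper_part J)) \<phi>)
      \<and> (\<exists>\<phi>. top_group_iso3 {g \<in> Aut_on (UNIV::'a set). \<forall>x\<in>J. g x \<in> J} (tau_d UNIV) (tau_d (lower_part J)) (tau_d J) (tau_d (upper_part J)) \<phi>)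
      \<and> (\<forall>x\<in>J. {g \<in> Aut_on UNIV. g x = x} =
           {a \<circ> b \<circ> c | a b c. a \<in> Aut_on (lower_part J) \<and> b \<in> {b' \<in> Aut_on J. b' x = x} \<and> c \<in> Aut_on (upper_part J)})"
proof -
  have "P51 J" using assms by (simp add: P51_def)
  then show ?thesis by (rule P51.main)
qed

theorem proposition5p1:
  fixes J :: "'a::linorder set"
  assumes "homogeneous_chain TYPE('a)"
    and "regular_interval J" and "proper_interval J" and "J \<noteq> {}"
  defines "Jm \<equiv> lower_part J" and "Jp \<equiv> upper_part J"
    and "H \<equiv> {g \<in> Aut_on (UNIV::'a set). \<forall>x\<in>J. g x \<in> J}"
  shows "is_subgroup_of H (Aut_on UNIV) \<and> openin (tau_p UNIV) H \<and> openin (tau_d UNIV) H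
      \<and> (\<exists>\<phi>. top_group_iso3 H (tau_p UNIV) (tau_p Jm) (tau_p J) (tau_p Jp) \<phi>)
      \<and> (\<exists>\<phi>. top_group_iso3 H (tau_d UNIV) (tau_d Jm) (tau_d J) (tau_d Jp) \<phi>)
      \<and> (\<forall>x\<in>J. {g \<in> Aut_on UNIV. g x = x} =
           {a \<circ> b \<circ> c | a b c. a \<in> Aut_on Jm \<and> b \<in> {b' \<in> Aut_on J. b' x = x} \<and> c \<in> Aut_on Jp})"
  unfolding Jm_def Jp_def H_def by (rule main_global[OF assms(1-4)])

end
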